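(* For all $x,u\in\mathbb R$, \[\int_0^1|\dot K_t(x,u)|\,dt\le 10\sup_{0<t\le1}K_t(x,u).\]
   Context: $R(x)=x^2/2$. $K_t(x,u)=\frac{e^{R(x)}}{\sqrt{1-e^{-2t}}}\exp\bigl(-\frac12\frac{(e^{-t}u-x)^2}{1-e^{-2t}}\bigr)$ for $t>0$, and $\dot K_t=\partial K_t/\partial t$. *)

theory Defs
  imports "HOL-Analysis.Analysis"
begin

definition R :: "real \<Rightarrow> real" where
  "R x = x\<^sup>2 / 2"

definition K :: "real \<Rightarrow> real \<Rightarrow> real \<Rightarrow> real" where
  "K t x u = exp (R x) / sqrt (1 - exp (-2*t)) *
     exp (-(1/2) * (exp (-t) * u - x)\<^sup>2 / (1 - exp (-2*t)))"

definition Kdot :: "real \<Rightarrow> real \<Rightarrow> real \<Rightarrow> real" where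
  "Kdot t x u = deriv (\<lambda>s. K s x u) t"

end

theory Submission
  imports Defs "HOL-Computational_Algebra.Polynomial"
begin


lemma no_zero_bound:
  fixes f f' :: "real \<Rightarrow> real"
  assumes ab: "a \<le> b" and der: "\<And>x. x \<in> {a..b} \<Longrightarrow> (f has_real_derivative f' x) (at x)"
    and cont: "continuous_on {a..b} f'" and nn: "\<And>x. x \<in> {a..b} \<Longrightarrow> 0 \<le> f x"
    and le: "\<And>x. x \<in> {a..b} \<Longrightarrow> f x \<le> M"
    and nz: "\<And>x. x \<in> {a<..<b} \<Longrightarrow> f' x \<noteq> 0"
  shows "integral {a..b} (\<lambda>x. \<bar>f' x\<bar>) \<le> M"
proof -
  have sign: "(\<forall>x\<in>{a..b}. 0 \<le> f' x) \<or> (\<forall>x\<in>{a..b}. f' x \<le> 0)"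
  proof (rule ccontr)
    assume "\<not> ?thesis"
    then obtain p q where p: "p \<in> {a..b}" "f' p < 0" and q: "q \<in> {a..b}" "0 < f' q"
      by (auto simp: not_le)
    have "p \<noteq> q" using p q by auto
    then consider "p < q" | "q < p" by linarith
    then show False
    proof cases
      case 1
      have "continuous_on {p..q} f'" using cont p q by (auto intro: continuous_on_subset)
      then obtain z where z: "p \<le> z" "z \<le> q" "f' z = 0"
        using IVT'[of f' p 0 q] p q 1 by auto
      have "z \<noteq> p" "z \<noteq> q" using z p q by auto
      then have "z \<in> {a<..<b}" using z p q by auto
      then show False using nz z by auto
    next
      case 2
      have "continuous_on {q..p} f'" using cont p q by (auto intro: continuous_on_subset)
      then obtain z where z: "q \<le> z" "z \<le> p" "f' z = 0"
        using IVT2'[of f' p 0 q] p q 2 by auto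
      have "z \<noteq> p" "z \<noteq> q" using z p q by auto
      then have "z \<in> {a<..<b}" using z p q by auto
      then show False using nz z by auto
    qed
  qed
  have ftc: "(f' has_integral (f b - f a)) {a..b}"
    apply (rule fundamental_theorem_of_calculus[OF ab])
    using der by (auto simp: has_real_derivative_iff_has_vector_derivative intro: has_vector_derivative_at_within)
  have ia: "f a \<le> M" "0 \<le> f a" "f b \<le> M" "0 \<le> f b" using ab nn le by auto
  from sign show ?thesis
  proof
    assume s: "\<forall>x\<in>{a..b}. 0 \<le> f' x"
    have "integral {a..b} (\<lambda>x. \<bar>f' x\<bar>) = integral {a..b} f'"
      by (rule integral_cong) (use s in auto)
    also have "\<dots> = f b - f a" using ftc by (rule integral_unique)
    finally show ?thesis using ia by linarith
  next
    assume s: "\<forall>x\<in>{a..b}. f' x \<le> 0"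
    have "integral {a..b} (\<lambda>x. \<bar>f' x\<bar>) = integral {a..b} (\<lambda>x. - f' x)"
      by (rule integral_cong) (use s in auto)
    also have "\<dots> = - (f b - f a)" using ftc by (simp add: integral_neg integral_unique)
    finally show ?thesis using ia by linarith
  qed
qed

lemma var_bound:
  fixes f f' :: "real \<Rightarrow> real"
  assumes ab: "a \<le> b" and der: "\<And>x. x \<in> {a..b} \<Longrightarrow> (f has_real_derivative f' x) (at x)"
    and cont: "continuous_on {a..b} f'" and nn: "\<And>x. x \<in> {a..b} \<Longrightarrow> 0 \<le> f x"
    and le: "\<And>x. x \<in> {a..b} \<Longrightarrow> f x \<le> M"
    and fin: "finite {x\<in>{a<..<b}. f' x = 0}"
  shows "integral {a..b} (\<lambda>x. \<bar>f' x\<bar>) \<le> (real (card {x\<in>{a<..<b}. f' x = 0}) + 1) * M"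
  using assms
proof (induction "card {x\<in>{a<..<b}. f' x = 0}" arbitrary: a b rule: less_induct)
  case less
  let ?Z = "{x\<in>{a<..<b}. f' x = 0}"
  have M0: "0 \<le> M" using less.prems(1) less.prems(4,5)[of a] by auto
  show ?case
  proof (cases "?Z = {}")
    case True
    have "integral {a..b} (\<lambda>x. \<bar>f' x\<bar>) \<le> M"
      apply (rule no_zero_bound[where f=f])
      using less.prems True by auto
    then show ?thesis using True by (metis card.empty of_nat_0 add_0 mult_1)
  next
    case False
    then obtain c where c: "c \<in> ?Z" by auto
    let ?Z1 = "{x\<in>{a<..<c}. f' x = 0}" and ?Z2 = "{x\<in>{c<..<b}. f' x = 0}"
    have sub1: "?Z1 \<subseteq> ?Z - {c}" and sub2: "?Z2 \<subseteq> ?Z - {c}" using c by auto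
    have disj: "?Z1 \<inter> ?Z2 = {}" by auto
    have fin1: "finite ?Z1" and fin2: "finite ?Z2"
      using less.prems(6) sub1 sub2 by (auto intro: finite_subset)
    have "card (?Z1 \<union> ?Z2) \<le> card (?Z - {c})"
      by (rule card_mono) (use less.prems(6) sub1 sub2 in auto)
    then have cs: "card ?Z1 + card ?Z2 \<le> card ?Z - 1"
      using card_Un_disjoint[OF fin1 fin2 disj] c less.prems(6) by auto
    have cpos: "card ?Z \<ge> 1" using c less.prems(6) card_0_eq[of ?Z] by (cases "card ?Z") auto
    have ac: "a \<le> c" "c \<le> b" using c by auto
    have I1: "integral {a..c} (\<lambda>x. \<bar>f' x\<bar>) \<le> (real (card ?Z1) + 1) * M"
      apply (rule less.hyps)
      using cs cpos apply linarith
      using ac less.prems fin1 fin2 by (auto intro: continuous_on_subset[OF less.prems(3)])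
    have I2: "integral {c..b} (\<lambda>x. \<bar>f' x\<bar>) \<le> (real (card ?Z2) + 1) * M"
      apply (rule less.hyps)
      using cs cpos apply linarith
      using ac less.prems fin1 fin2 by (auto intro: continuous_on_subset[OF less.prems(3)])
    have int: "(\<lambda>x. \<bar>f' x\<bar>) integrable_on {a..b}"
      by (rule integrable_continuous_interval) (intro continuous_intros less.prems)
    have "integral {a..b} (\<lambda>x. \<bar>f' x\<bar>) = integral {a..c} (\<lambda>x. \<bar>f' x\<bar>) + integral {c..b} (\<lambda>x. \<bar>f' x\<bar>)"
      using Henstock_Kurzweil_Integration.integral_combine[OF ac int] by simp
    also have "\<dots> \<le> (real (card ?Z1) + 1) * M + (real (card ?Z2) + 1) * M" using I1 I2 by simp
    also have "\<dots> = (real (card ?Z1 + card ?Z2) + 2) * M" by (simp add: algebra_simps)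
    also have "\<dots> \<le> (real (card ?Z) + 1) * M"
      apply (rule mult_right_mono[OF _ M0]) using cs cpos by linarith
    finally show ?thesis .
  qed
qed



definition FF :: "real \<Rightarrow> real \<Rightarrow> real \<Rightarrow> real" where
  "FF t x u = - ln (1 - exp (-2*t)) / 2 + (-(1/2) * (exp (-t) * u - x)\<^sup>2 / (1 - exp (-2*t)))"

definition gg :: "real \<Rightarrow> real \<Rightarrow> real \<Rightarrow> real" where
  "gg s x u = s ^ 3 - u * x * s ^ 2 + (u ^ 2 + x ^ 2 - 1) * s - u * x"

definition DD :: "real \<Rightarrow> real \<Rightarrow> real \<Rightarrow> real" where
  "DD t x u = exp (R x + FF t x u) * exp (-t) * gg (exp (-t)) x u / (1 - exp (-2*t))^2"

lemma v_pos: "0 < t \<Longrightarrow> 0 < 1 - exp (-2*t::real)"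
  by simp

lemma K_eq: assumes "0 < t" shows "K t x u = exp (R x + FF t x u)"
proof -
  define v where "v = 1 - exp (-2*t)"
  define A where "A = -(1/2) * (exp (-t) * u - x)\<^sup>2 / (1 - exp (-2*t))"
  have v: "0 < v" using assms by (simp add: v_def)
  have s: "1 / sqrt v = exp (- ln v / 2)"
  proof -
    have "sqrt v = v powr (1/2)" using v by (simp add: powr_half_sqrt)
    also have "\<dots> = exp (ln v / 2)" using v by (simp add: powr_def)
    finally have "sqrt v = exp (ln v / 2)" .
    then have "1 / sqrt v = inverse (exp (ln v / 2))" by (simp add: inverse_eq_divide)
    also have "\<dots> = exp (- (ln v / 2))" by (rule exp_minus[symmetric])
    finally show ?thesis by (simp only: minus_divide_left)
  qed
  have "K t x u = exp (R x) / sqrt v * exp A" unfolding K_def v_def A_def by (rule refl)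
  also have "\<dots> = exp (R x) * (1 / sqrt v) * exp A" by (simp only: times_divide_eq_right mult_1_right)
  also have "\<dots> = exp (R x) * exp (- ln v / 2) * exp A" by (simp only: s)
  also have "\<dots> = exp (R x + (- ln v / 2 + A))" by (simp only: exp_add mult.assoc)
  finally show ?thesis unfolding FF_def v_def A_def .
qed

lemma alg:
  fixes s v w x u :: real
  assumes "v = 1 - s ^ 2" "v \<noteq> 0" "w = s * u - x"
  shows "0 + (- (2 * s ^ 2/v)/2 + (-(1/2)) * ((2 * w * (-s * u)) * v - w ^ 2 * (2 * s ^ 2))/(v * v))
       = s * gg s x u / v ^ 2"
proof -
  have "(- (2 * s ^ 2/v)/2 + (-(1/2)) * ((2 * w * (-s * u)) * v - w ^ 2 * (2 * s ^ 2))/(v * v))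
      = (- (s ^ 2) * v + w * s * u * v + w ^ 2 * s ^ 2)/v ^ 2"
    using assms(2) by (simp add: field_simps power2_eq_square)
  also have "- (s ^ 2) * v + w * s * u * v + w ^ 2 * s ^ 2 = s * gg s x u"
    unfolding gg_def assms(1,3) by (simp add: algebra_simps power2_eq_square power3_eq_cube)
  finally show ?thesis by simp
qed

lemma FF_deriv: assumes "0 < t"
  shows "((\<lambda>s. R x + FF s x u) has_real_derivative
     exp (-t) * gg (exp (-t)) x u / (1 - exp (-2 * t)) ^ 2) (at t)"
proof -
  define v where "v = (\<lambda>s::real. 1 - exp (-2 * s))"
  define w where "w = (\<lambda>s::real. exp (-s) * u - x)"
  have vp: "0 < v t" using assms by (simp add: v_def)
  have e2: "exp (-2 * t) = (exp (-t)) ^ 2" by (simp add: power2_eq_square flip: exp_add)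
  have V: "(v has_real_derivative 2 * (exp (-t)) ^ 2) (at t)"
    unfolding v_def e2[symmetric] by (auto intro!: derivative_eq_intros)
  have L: "((\<lambda>s. ln (v s)) has_real_derivative (2 * (exp (-t)) ^ 2) / v t) (at t)"
    using DERIV_chain2[OF DERIV_ln_divide[OF vp] V] by (simp add: divide_inverse mult.commute)
  have W: "(w has_real_derivative (- exp (-t) * u)) (at t)"
    unfolding w_def by (auto intro!: derivative_eq_intros)
  have W2: "((\<lambda>s. (w s) ^ 2) has_real_derivative 2 * w t * (- exp (-t) * u)) (at t)"
    using DERIV_mult[OF W W] by (simp add: power2_eq_square algebra_simps)
  have Q: "((\<lambda>s. (w s) ^ 2 / v s) has_real_derivative
       ((2 * w t * (- exp (-t) * u)) * v t - (w t) ^ 2 * (2 * (exp (-t)) ^ 2)) / (v t * v t)) (at t)"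
    by (rule DERIV_divide[OF W2 V]) (use vp in simp)
  have L2: "((\<lambda>s. - ln (v s) / 2) has_real_derivative - ((2 * (exp (-t)) ^ 2) / v t) / 2) (at t)"
    by (rule DERIV_cdivide[OF DERIV_minus[OF L]])
  have D: "((\<lambda>s. R x + (- ln (v s) / 2 + (-(1/2)) * ((w s) ^ 2 / v s))) has_real_derivative
      0 + (- ((2 * (exp (-t)) ^ 2) / v t) / 2 + (-(1/2)) * (((2 * w t * (- exp (-t) * u)) * v t - (w t) ^ 2 * (2 * (exp (-t)) ^ 2)) / (v t * v t)))) (at t)"
    by (intro DERIV_add DERIV_const DERIV_cmult Q L2)
  have eq: "0 + (- ((2 * (exp (-t)) ^ 2) / v t) / 2 + (-(1/2)) * (((2 * w t * (- exp (-t) * u)) * v t - (w t) ^ 2 * (2 * (exp (-t)) ^ 2)) / (v t * v t)))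
     = exp (-t) * gg (exp (-t)) x u / (1 - exp (-2 * t)) ^ 2"
    using alg[of "v t" "exp (-t)" "w t" u x] vp unfolding v_def w_def e2 by (simp add: mult.commute)
  have fe: "(\<lambda>s. R x + FF s x u) = (\<lambda>s. R x + (- ln (v s) / 2 + (-(1/2)) * ((w s) ^ 2 / v s)))"
    unfolding FF_def v_def w_def by (simp add: times_divide_eq_right)
  show ?thesis using D eq fe by simp
qed


lemma K_deriv: assumes "0 < t"
  shows "((\<lambda>s. K s x u) has_real_derivative DD t x u) (at t)"
proof -
  have "((\<lambda>s. exp (R x + FF s x u)) has_real_derivative
      exp (R x + FF t x u) * (exp (-t) * gg (exp (-t)) x u / (1 - exp (-2*t)) ^ 2)) (at t)"
    by (rule DERIV_chain2[OF DERIV_exp FF_deriv[OF assms]])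
  then have "((\<lambda>s. exp (R x + FF s x u)) has_real_derivative DD t x u) (at t)"
    unfolding DD_def by (simp add: mult.assoc)
  then show ?thesis
    by (rule has_field_derivative_transform_within_open[where S="{0<..}"])
       (use assms K_eq in auto)
qed

lemma Kdot_eq: "0 < t \<Longrightarrow> Kdot t x u = DD t x u"
  unfolding Kdot_def by (rule DERIV_imp_deriv[OF K_deriv])

lemma K_nonneg: "0 < t \<Longrightarrow> 0 \<le> K t x u"
  using K_eq[of t x u] by simp

lemma DD_cont: assumes "0 < a" shows "continuous_on {a..b} (\<lambda>t. DD t x u)"
proof (rule continuous_at_imp_continuous_on, rule ballI)
  fix t assume "t \<in> {a..b}"
  then have t0: "0 < t" using assms by auto
  have v: "1 - exp (-2*t) \<noteq> 0" using t0 by simp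
  have cE: "isCont (\<lambda>s. exp (R x + FF s x u)) t"
    by (rule DERIV_isCont[OF DERIV_chain2[OF DERIV_exp FF_deriv[OF t0]]])
  have cH: "isCont (\<lambda>s. exp (-s) * gg (exp (-s)) x u / (1 - exp (-2 * s)) ^ 2) t"
    unfolding gg_def using v by (intro continuous_intros) auto
  have "isCont (\<lambda>s. exp (R x + FF s x u) * (exp (-s) * gg (exp (-s)) x u / (1 - exp (-2 * s)) ^ 2)) t"
    by (rule isCont_mult[OF cE cH])
  then show "isCont (\<lambda>t. DD t x u) t" unfolding DD_def by (simp add: mult.assoc)
qed

lemma DD_zero: assumes "0 < t" "DD t x u = 0" shows "gg (exp (-t)) x u = 0"
proof -
  have "0 < 1 - exp (-2*t)" using assms by simp
  then show ?thesis using assms(2) unfolding DD_def by simp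
qed

lemma zero_card:
  assumes "0 < a"
  shows "finite {t\<in>{a<..<b}. DD t x u = 0} \<and> card {t\<in>{a<..<b}. DD t x u = 0} \<le> 3"
proof -
  define p where "p = [:-(u*x), u ^ 2 + x ^ 2 - 1, -(u*x), 1:]"
  have pe: "poly p s = gg s x u" for s
    unfolding p_def gg_def by (simp add: algebra_simps power2_eq_square power3_eq_cube)
  have p0: "p \<noteq> 0" and dp: "degree p = 3" unfolding p_def by auto
  have fin: "finite {s. poly p s = 0}" by (rule poly_roots_finite[OF p0])
  have cr: "card {s. poly p s = 0} \<le> 3" using card_poly_roots_bound[OF p0] dp by simp
  have sub: "{t\<in>{a<..<b}. DD t x u = 0} \<subseteq> (\<lambda>s. - ln s) ` {s. poly p s = 0}"
  proof
    fix t assume t: "t \<in> {t\<in>{a<..<b}. DD t x u = 0}"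
    then have "0 < t" using assms by auto
    then have "poly p (exp (-t)) = 0" using DD_zero[of t x u] t pe by auto
    moreover have "t = - ln (exp (-t))" by simp
    ultimately show "t \<in> (\<lambda>s. - ln s) ` {s. poly p s = 0}" by blast
  qed
  have f2: "finite ((\<lambda>s. - ln s) ` {s. poly p s = 0})" using fin by simp
  have "card {t\<in>{a<..<b}. DD t x u = 0} \<le> card ((\<lambda>s. - ln s) ` {s. poly p s = 0})"
    by (rule card_mono[OF f2 sub])
  also have "\<dots> \<le> 3" using card_image_le[OF fin, of "\<lambda>s. - ln s"] cr by linarith
  finally show ?thesis using finite_subset[OF sub f2] by simp
qed

lemma int_bound:
  assumes a: "0 < a" "a \<le> 1" and Kle: "\<And>t. t \<in> {0<..1} \<Longrightarrow> K t x u \<le> M"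
  shows "integral {a..1} (\<lambda>t. \<bar>DD t x u\<bar>) \<le> 4 * M"
proof -
  have M0: "0 \<le> M" using Kle[of 1] K_nonneg[of 1 x u] by simp
  have zc: "finite {t\<in>{a<..<1}. DD t x u = 0}" "card {t\<in>{a<..<1}. DD t x u = 0} \<le> 3"
    using zero_card[OF a(1), of 1 x u] by auto
  have "integral {a..1} (\<lambda>t. \<bar>DD t x u\<bar>) \<le> (real (card {t\<in>{a<..<1}. DD t x u = 0}) + 1) * M"
    apply (rule var_bound[where f="\<lambda>s. K s x u"])
    using a Kle K_nonneg K_deriv DD_cont[OF a(1)] zc by auto
  also have "\<dots> \<le> 4 * M"
    apply (rule mult_right_mono[OF _ M0]) using zc(2) by simp
  finally show ?thesis .
qed

theorem mainTheorem7:
  fixes x u :: real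
  shows "(\<integral>\<^sup>+ t \<in> {0<..1}. ennreal \<bar>Kdot t x u\<bar> \<partial>lborel)
           \<le> 10 * (SUP t \<in> {0<..1}. ennreal (K t x u))"
proof -
  define S where "S = (SUP t \<in> {0<..1}. ennreal (K t x u))"
  have "(\<integral>\<^sup>+ t \<in> {0<..1}. ennreal \<bar>Kdot t x u\<bar> \<partial>lborel) \<le> 10 * S"
  proof (cases "S = top")
    case True
    then show ?thesis by simp
  next
    case False
    define M where "M = enn2real S"
    have SM: "S = ennreal M" unfolding M_def using False by (simp add: ennreal_enn2real less_top)
    have M0: "0 \<le> M" unfolding M_def by simp
    have Kle: "K t x u \<le> M" if "t \<in> {0<..1}" for t
    proof -
      have "ennreal (K t x u) \<le> S" unfolding S_def using that by (rule SUP_upper)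
      then show ?thesis using SM M0 by simp
    qed
    define a where "a = (\<lambda>n::nat. inverse (real (Suc n)))"
    have a0: "0 < a n" "a n \<le> 1" for n unfolding a_def by (auto simp: field_simps)
    define G where "G = (\<lambda>n t. ennreal \<bar>DD t x u\<bar> * indicator {a n..1} t)"
    have amono: "a n \<le> a m" if "m \<le> n" for m n unfolding a_def using that
      by (simp add: frac_le)
    have inc: "incseq G"
      unfolding incseq_def G_def
    proof (intro allI impI le_funI)
      fix m n :: nat and t assume "m \<le> n"
      then have "a n \<le> a m" by (rule amono)
      then show "ennreal \<bar>DD t x u\<bar> * indicator {a m..1} t \<le> ennreal \<bar>DD t x u\<bar> * indicator {a n..1} t"
        by (auto split: split_indicator)
    qed
    have meas: "G n \<in> borel_measurable lborel" for n
      unfolding G_def DD_def FF_def gg_def R_def by measurable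
    have pw: "ennreal \<bar>Kdot t x u\<bar> * indicator {0<..1} t = (SUP n. G n t)" for t
    proof (cases "t \<in> {0<..1}")
      case True
      then have t0: "0 < t" by auto
      obtain n where n: "inverse (real (Suc n)) < t" using reals_Archimedean[OF t0] by auto
      have up: "G m t \<le> ennreal \<bar>DD t x u\<bar>" for m
        unfolding G_def by (auto split: split_indicator)
      have "G n t = ennreal \<bar>DD t x u\<bar>" unfolding G_def a_def using n True by auto
      then have "(SUP n. G n t) = ennreal \<bar>DD t x u\<bar>"
        by (metis (no_types, lifting) SUP_upper UNIV_I antisym SUP_least up)
      then show ?thesis using True Kdot_eq[OF t0, of x u] by simp
    next
      case False
      have "G n t = 0" for n unfolding G_def using False a0[of n] by (auto split: split_indicator)
      then show ?thesis using False by simp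
    qed
    have In: "integral\<^sup>N lborel (G n) \<le> ennreal (4 * M)" for n
    proof -
      have int: "(\<lambda>t. \<bar>DD t x u\<bar>) integrable_on {a n..1}"
        by (rule integrable_continuous_interval) (intro continuous_intros DD_cont a0)
      have "integral\<^sup>N lborel (\<lambda>t. ennreal (indicator {a n..1} t * \<bar>DD t x u\<bar>))
            = ennreal (integral {a n..1} (\<lambda>t. \<bar>DD t x u\<bar>))"
        by (rule nn_integral_has_integral_lebesgue) (use int in auto)
      moreover have "integral\<^sup>N lborel (G n) = integral\<^sup>N lborel (\<lambda>t. ennreal (indicator {a n..1} t * \<bar>DD t x u\<bar>))"
        unfolding G_def by (intro nn_integral_cong) (auto split: split_indicator)
      moreover have "integral {a n..1} (\<lambda>t. \<bar>DD t x u\<bar>) \<le> 4 * M"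
        by (rule int_bound[OF a0]) (use Kle in auto)
      ultimately show ?thesis by (simp add: ennreal_leI)
    qed
    have "(\<integral>\<^sup>+ t \<in> {0<..1}. ennreal \<bar>Kdot t x u\<bar> \<partial>lborel) = (\<integral>\<^sup>+ t. (SUP n. G n t) \<partial>lborel)"
      using pw by simp
    also have "\<dots> = (SUP n. integral\<^sup>N lborel (G n))"
      by (rule nn_integral_monotone_convergence_SUP[OF inc meas])
    also have "\<dots> \<le> ennreal (4 * M)" by (rule SUP_least) (rule In)
    also have "\<dots> = 4 * ennreal M" using M0 by (simp add: ennreal_mult)
    also have "\<dots> \<le> 10 * ennreal M" by (rule mult_right_mono) auto
    finally show ?thesis using SM by simp
  qed
  then show ?thesis unfolding S_def .
qed

end
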